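(* Let $\langle X,d\rangle$ be a metric space. The following are equivalent: (1) $X$ is cofinally Bourbaki quasi-complete; (2) every continuous function $f$ from $X$ to any metric space $\langle Y,\rho\rangle$ maps every cofinally Bourbaki quasi-Cauchy sequence in $X$ to a sequence in $Y$ that has a Cauchy subsequence; (3) every continuous function from $X$ to any metric space $\langle Y,\rho\rangle$ maps every cofinally Bourbaki quasi-Cauchy sequence in $X$ to a cofinally Cauchy sequence in $Y$; (4) every continuous function from $X$ to any metric space $\langle Y,\rho\rangle$ maps every cofinally Bourbaki quasi-Cauchy sequence in $X$ to a cofinally Bourbaki-Cauchy sequence in $Y$; (5) every real-valued continuous function on $X$ maps every cofinally Bourbaki quasi-Cauchy sequence in $X$ to a cofinally Bourbaki-Cauchy sequence in $\mathbb{R}$.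
   Context: For $\varepsilon>0$, an $\varepsilon$-chain joining $x,y$ is a finite sequence $x=x_0,\dots,x_n=y$ with $d(x_{i-1},x_i)<\varepsilon$. A sequence $\langle x_n\rangle$ in $X$ is cofinally Bourbaki quasi-Cauchy if for every $\varepsilon>0$ there is an infinite $N_\varepsilon\subseteq\mathbb{N}$ such that any $x_j,x_k$ with $j,k\in N_\varepsilon$ can be joined by an $\varepsilon$-chain; $X$ is cofinally Bourbaki quasi-complete if every such sequence has a cluster point. A sequence $\langle y_n\rangle$ in $\langle Y,\rho\rangle$ is cofinally Cauchy if for every $\varepsilon>0$ there is an infinite $N_\varepsilon\subseteq\mathbb{N}$ with $\rho(y_n,y_m)<\varepsilon$ for all $n,m\in N_\varepsilon$. Let $S^1_\rho(p,\varepsilon)$ be the open $\varepsilon$-ball about $p$ and $S^{m}_\rho(p,\varepsilon)=\{y:\rho(y,S^{m-1}_\rho(p,\varepsilon))<\varepsilon\}$; $\langle y_n\rangle$ is cofinally Bourbaki-Cauchy if for every $\varepsilon>0$ there exist an infinite $N_\varepsilon\subseteq\mathbb{N}$, $m\in\mathbb{N}$, $p\in Y$ with $y_n\in S^m_\rho(p,\varepsilon)$ for all $n\in N_\varepsilon$. *)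

theory Defs
  imports "HOL-Analysis.Analysis"
begin

text \<open>The metric space X is a set S in a type of class metric_space (subspace metric).
  An e-chain in S joining x and y: a finite list in S starting at x, ending at y,
  with consecutive distances < e.\<close>
definition eps_chain_joins :: "'a::metric_space set \<Rightarrow> real \<Rightarrow> 'a \<Rightarrow> 'a \<Rightarrow> bool" where
  "eps_chain_joins S e x y \<longleftrightarrow>
     (\<exists>xs. xs \<noteq> [] \<and> hd xs = x \<and> last xs = y \<and> set xs \<subseteq> S \<and>
        (\<forall>i. Suc i < length xs \<longrightarrow> dist (xs ! i) (xs ! Suc i) < e))"

definition cofinally_bourbaki_quasi_cauchy :: "'a::metric_space set \<Rightarrow> (nat \<Rightarrow> 'a) \<Rightarrow> bool" where
  "cofinally_bourbaki_quasi_cauchy S x \<longleftrightarrow>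
     (\<forall>n. x n \<in> S) \<and>
     (\<forall>e>0. \<exists>N::nat set. infinite N \<and> (\<forall>j\<in>N. \<forall>k\<in>N. eps_chain_joins S e (x j) (x k)))"

definition cluster_point_in :: "'a::metric_space set \<Rightarrow> (nat \<Rightarrow> 'a) \<Rightarrow> 'a \<Rightarrow> bool" where
  "cluster_point_in S x p \<longleftrightarrow> p \<in> S \<and> (\<forall>e>0. \<forall>n. \<exists>m\<ge>n. dist (x m) p < e)"

definition cofinally_bourbaki_quasi_complete :: "'a::metric_space set \<Rightarrow> bool" where
  "cofinally_bourbaki_quasi_complete S \<longleftrightarrow>
     (\<forall>x. cofinally_bourbaki_quasi_cauchy S x \<longrightarrow> (\<exists>p. cluster_point_in S x p))"

definition cofinally_cauchy :: "(nat \<Rightarrow> 'b::metric_space) \<Rightarrow> bool" where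
  "cofinally_cauchy y \<longleftrightarrow>
     (\<forall>e>0. \<exists>N::nat set. infinite N \<and> (\<forall>n\<in>N. \<forall>m\<in>N. dist (y n) (y m) < e))"

text \<open>Bourbaki balls S^m(p,e), m \<ge> 1 (index 0 is unused and set to the empty set).\<close>
fun bourbaki_ball :: "nat \<Rightarrow> 'b::metric_space \<Rightarrow> real \<Rightarrow> 'b set" where
  "bourbaki_ball 0 p e = {}"
| "bourbaki_ball (Suc 0) p e = ball p e"
| "bourbaki_ball (Suc (Suc m)) p e = {y. infdist y (bourbaki_ball (Suc m) p e) < e}"

definition cofinally_bourbaki_cauchy :: "(nat \<Rightarrow> 'b::metric_space) \<Rightarrow> bool" where
  "cofinally_bourbaki_cauchy y \<longleftrightarrow>
     (\<forall>e>0. \<exists>N::nat set. \<exists>m\<ge>1. \<exists>p. infinite N \<and> (\<forall>n\<in>N. y n \<in> bourbaki_ball m p e))"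

definition has_cauchy_subseq :: "(nat \<Rightarrow> 'b::metric_space) \<Rightarrow> bool" where
  "has_cauchy_subseq y \<longleftrightarrow> (\<exists>r. strict_mono r \<and> Cauchy (y \<circ> r))"

end

theory Submission
  imports Defs
begin

lemma bball_center: "e > 0 \<Longrightarrow> p \<in> bourbaki_ball (Suc m) p e"
proof (induction m)
  case 0 then show ?case by simp
next
  case (Suc m)
  then show ?case by (simp add: infdist_zero)
qed

lemma bball_sub: "e > 0 \<Longrightarrow> bourbaki_ball m p e \<subseteq> ball p (real m * e)"
proof (induction m)
  case 0 then show ?case by simp
next
  case (Suc m)
  note IH = Suc.IH and ep = Suc.prems
  show ?case
  proof (cases m)
    case 0 then show ?thesis by simp
  next
    case mk: (Suc k)
    show ?thesis
    proof
      fix y assume y: "y \<in> bourbaki_ball (Suc m) p e"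
      let ?A = "bourbaki_ball m p e"
      have ne: "?A \<noteq> {}" using bball_center[OF ep, of p k] mk by (metis empty_iff)
      have "infdist y ?A < e" using y mk by simp
      then have "(INF a\<in>?A. dist y a) < e" using ne by (simp add: infdist_notempty)
      then obtain a where a: "a \<in> ?A" "dist y a < e"
        using ne by (subst (asm) cINF_less_iff) (auto intro: bdd_belowI2[where m=0])
      have "dist p a < real m * e" using a IH ep by auto
      then have "dist p y < real m * e + e" using a dist_triangle[of p y a]
        by (simp add: dist_commute)
      then show "y \<in> ball p (real (Suc m) * e)" by (simp add: algebra_simps)
    qed
  qed
qed

lemma not_cluster_avoid:
  assumes "\<not> cluster_point_in S x p" "p \<in> S"
  shows "\<exists>\<delta>>0. \<forall>m. x m \<noteq> p \<longrightarrow> \<delta> \<le> dist p (x m)"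
proof -
  obtain e n where e: "e > 0" "\<forall>m\<ge>n. \<not> dist (x m) p < e"
    using assms unfolding cluster_point_in_def by auto
  obtain d where d: "d > 0" "\<forall>y\<in>x ` {..<n}. y \<noteq> p \<longrightarrow> d \<le> dist p y"
    using finite_set_avoid[of "x ` {..<n}" p] by auto
  show ?thesis
  proof (intro exI[of _ "min e d"] conjI allI impI)
    fix m assume "x m \<noteq> p"
    then show "min e d \<le> dist p (x m)"
      using e d by (cases "m < n") (auto simp: dist_commute not_less)
  qed (use e d in auto)
qed

lemma tietze_real:
  fixes g :: "'a::metric_space \<Rightarrow> real"
  assumes "continuous_on T g" "closedin (top_of_set S) T"
  obtains f where "continuous_on S f" "\<forall>y\<in>T. f y = g y"
proof -
  have TS: "T \<subseteq> S" using assms(2) closedin_imp_subset by blast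
  have N: "normal_space (top_of_set S)"
    by (rule metrizable_imp_normal_space[OF metrizable_space_subtopology[OF metrizable_space_euclidean]])
  have c: "continuous_map (subtopology (top_of_set S) T) euclideanreal g"
    using assms(1) TS by (simp add: subtopology_subtopology Int_absorb1)
  obtain f where "continuous_map (top_of_set S) euclideanreal f" "\<And>y. y \<in> T \<Longrightarrow> f y = g y"
    using Tietze_extension_realinterval[OF N assms(2), of UNIV g] c by auto
  then show ?thesis using that by auto
qed

lemma bad_function:
  assumes xS: "\<forall>n. x n \<in> S" and nc: "\<forall>p. \<not> cluster_point_in S x p"
  obtains f :: "'a::metric_space \<Rightarrow> real" where "continuous_on S f" "\<forall>n. real n \<le> f (x n)"
proof -
  let ?T = "range x"
  have fin: "finite {n. x n = y}" for y
  proof (rule ccontr)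
    assume inf: "infinite {n. x n = y}"
    then obtain k where "x k = y" using not_finite_existsD by auto
    then have "y \<in> S" using xS by auto
    moreover have "\<forall>e>0. \<forall>n. \<exists>m\<ge>n. dist (x m) y < e"
      using inf unfolding infinite_nat_iff_unbounded_le by fastforce
    ultimately show False using nc unfolding cluster_point_in_def by blast
  qed
  define g where "g y = real (Max {n. x n = y})" for y
  have gx: "real n \<le> g (x n)" for n
    unfolding g_def using fin[of "x n"] by (simp add: Max_ge)
  have iso: "\<exists>\<delta>>0. \<forall>m. x m \<noteq> p \<longrightarrow> \<delta> \<le> dist p (x m)" if "p \<in> S" for p
    using not_cluster_avoid[of S x p] nc that by auto
  have cg: "continuous_on ?T g"
    unfolding continuous_on_iff
  proof (intro ballI allI impI)
    fix y e assume y: "y \<in> ?T" and e: "(0::real) < e"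
    obtain d where d: "d > 0" "\<forall>m. x m \<noteq> y \<longrightarrow> d \<le> dist y (x m)"
      using iso[of y] y xS by auto
    show "\<exists>d>0. \<forall>x'\<in>?T. dist x' y < d \<longrightarrow> dist (g x') (g y) < e"
    proof (intro exI[of _ d] conjI ballI impI)
      fix x' assume "x' \<in> ?T" "dist x' y < d"
      then have "x' = y" using d by (auto simp: dist_commute not_le)
      then show "dist (g x') (g y) < e" using e by simp
    qed (use d in auto)
  qed
  have cl: "closedin (top_of_set S) ?T"
    unfolding closedin_limpt
  proof (intro conjI allI impI)
    show "?T \<subseteq> S" using xS by auto
    fix p assume p: "p islimpt ?T \<and> p \<in> S"
    obtain d where d: "d > 0" "\<forall>m. x m \<noteq> p \<longrightarrow> d \<le> dist p (x m)"
      using iso[of p] p by auto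
    then show "p \<in> ?T" using p unfolding islimpt_approachable
      by (auto simp: dist_commute) (meson not_le)
  qed
  obtain f where "continuous_on S f" "\<forall>y\<in>?T. f y = g y"
    using tietze_real[OF cg cl] by blast
  then show ?thesis using that gx by auto
qed

lemma bounded_infinite_False:
  assumes "infinite (N::nat set)" "\<forall>n\<in>N. real n \<le> h n" "\<forall>n\<in>N. \<bar>h n\<bar> \<le> B"
  shows False
proof -
  obtain n where "n \<in> N" "n > nat \<lceil>B\<rceil>"
    using assms(1) unfolding infinite_nat_iff_unbounded by auto
  then have "real n > B" by linarith
  then show False using assms \<open>n \<in> N\<close> by fastforce
qed

lemma cluster_infinite:
  assumes "cluster_point_in S x p" "\<forall>n. x n \<in> S" "continuous_on S f" "e > 0"
  shows "infinite {n. dist (f (x n)) (f p) < e}"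
proof -
  have pS: "p \<in> S" using assms(1) unfolding cluster_point_in_def by auto
  obtain d where d: "d > 0" "\<forall>x'\<in>S. dist x' p < d \<longrightarrow> dist (f x') (f p) < e"
    using assms(3) pS assms(4) unfolding continuous_on_iff by blast
  show ?thesis unfolding infinite_nat_iff_unbounded_le
  proof
    fix n
    obtain m where "m \<ge> n" "dist (x m) p < d" using assms(1) d(1) unfolding cluster_point_in_def by blast
    then show "\<exists>m\<ge>n. m \<in> {n. dist (f (x n)) (f p) < e}" using d assms(2) by auto
  qed
qed

lemma subseq_from_infinite:
  fixes y :: "nat \<Rightarrow> 'b::metric_space"
  assumes "\<forall>e>0. infinite {n. dist (y n) q < e}"
  shows "has_cauchy_subseq y"
proof -
  have ex: "\<exists>n>m. dist (y n) q < e" if "e > 0" for m e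
    using assms that unfolding infinite_nat_iff_unbounded by blast
  let ?P = "\<lambda>k n. dist (y n) q < 1 / (real k + 1)"
  have "\<exists>r. \<forall>k. ?P k (r k) \<and> r k < r (Suc k)"
  proof (rule dependent_nat_choice)
    show "\<exists>x. ?P 0 x" using ex[of 1 0] by auto
    show "\<exists>y'. ?P (Suc k) y' \<and> n < y'" if "?P k n" for n k
      using ex[of "1 / (real (Suc k) + 1)" n] by auto
  qed
  then obtain r where r: "\<forall>k. ?P k (r k) \<and> r k < r (Suc k)" by blast
  have sm: "strict_mono r" using r by (simp add: strict_mono_Suc_iff)
  have "(y \<circ> r) \<longlonglongrightarrow> q"
  proof (rule metric_LIMSEQ_I)
    fix e :: real assume e: "e > 0"
    obtain N where N: "inverse (real (Suc N)) < e" using reals_Archimedean[OF e] by blast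
    show "\<exists>no. \<forall>n\<ge>no. dist ((y \<circ> r) n) q < e"
    proof (intro exI allI impI)
      fix n assume "n \<ge> N"
      then have "1 / (real n + 1) \<le> inverse (real (Suc N))"
        by (simp add: field_simps)
      then show "dist ((y \<circ> r) n) q < e" using r N by (smt (verit) comp_apply)
    qed
  qed
  then have "Cauchy (y \<circ> r)" by (rule LIMSEQ_imp_Cauchy)
  then show ?thesis unfolding has_cauchy_subseq_def using sm by blast
qed


lemma forward:
  fixes f :: "'a::metric_space \<Rightarrow> 'b::metric_space"
  assumes "cofinally_bourbaki_quasi_complete S" "continuous_on S f"
    "cofinally_bourbaki_quasi_cauchy S x"
  shows "has_cauchy_subseq (f \<circ> x)" "cofinally_cauchy (f \<circ> x)" "cofinally_bourbaki_cauchy (f \<circ> x)"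
proof -
  obtain p where p: "cluster_point_in S x p"
    using assms unfolding cofinally_bourbaki_quasi_complete_def by blast
  have xS: "\<forall>n. x n \<in> S" using assms(3) unfolding cofinally_bourbaki_quasi_cauchy_def by blast
  note inf = cluster_infinite[OF p xS assms(2)]
  show "has_cauchy_subseq (f \<circ> x)"
    by (rule subseq_from_infinite[where q="f p"]) (use inf in auto)
  show "cofinally_cauchy (f \<circ> x)"
    unfolding cofinally_cauchy_def
  proof (intro allI impI)
    fix e :: real assume e: "e > 0"
    let ?N = "{n. dist (f (x n)) (f p) < e/2}"
    have "\<forall>n\<in>?N. \<forall>m\<in>?N. dist ((f \<circ> x) n) ((f \<circ> x) m) < e"
    proof (intro ballI)
      fix n m assume "n \<in> ?N" "m \<in> ?N"
      then show "dist ((f \<circ> x) n) ((f \<circ> x) m) < e"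
        using dist_triangle_half_l[of "f (x n)" "f p" e "f (x m)"] by (simp add: dist_commute)
    qed
    then show "\<exists>N. infinite N \<and> (\<forall>n\<in>N. \<forall>m\<in>N. dist ((f \<circ> x) n) ((f \<circ> x) m) < e)"
      using inf[of "e/2"] e by auto
  qed
  show "cofinally_bourbaki_cauchy (f \<circ> x)"
    unfolding cofinally_bourbaki_cauchy_def
  proof (intro allI impI)
    fix e :: real assume e: "e > 0"
    show "\<exists>N. \<exists>m\<ge>1. \<exists>q. infinite N \<and> (\<forall>n\<in>N. (f \<circ> x) n \<in> bourbaki_ball m q e)"
      using inf[OF e] by (intro exI[of _ "{n. dist (f (x n)) (f p) < e}"] exI[of _ "1::nat"] exI[of _ "f p"])
        (auto simp: dist_commute)
  qed
qed

lemma backward: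
  assumes H: "\<forall>f::'a::metric_space \<Rightarrow> real. continuous_on S f \<longrightarrow>
         (\<forall>x. cofinally_bourbaki_quasi_cauchy S x \<longrightarrow> P (f \<circ> x))"
    and PB: "\<And>h::nat \<Rightarrow> real. P h \<Longrightarrow> \<exists>N B. infinite N \<and> (\<forall>n\<in>N. \<bar>h n\<bar> \<le> B)"
  shows "cofinally_bourbaki_quasi_complete S"
  unfolding cofinally_bourbaki_quasi_complete_def
proof (rule allI, rule impI, rule ccontr)
  fix x assume x: "cofinally_bourbaki_quasi_cauchy S x" and nc: "\<nexists>p. cluster_point_in S x p"
  have xS: "\<forall>n. x n \<in> S" using x unfolding cofinally_bourbaki_quasi_cauchy_def by blast
  obtain f :: "'a \<Rightarrow> real" where f: "continuous_on S f" "\<forall>n. real n \<le> f (x n)"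
    using bad_function[OF xS] nc by blast
  have "P (f \<circ> x)" using H[rule_format, OF f(1) x] .
  then obtain N B where "infinite N" "\<forall>n\<in>N. \<bar>(f \<circ> x) n\<bar> \<le> B" using PB by blast
  then show False using bounded_infinite_False[of N "f \<circ> x" B] f by auto
qed

lemma PB_hcs: "has_cauchy_subseq (h::nat \<Rightarrow> real) \<Longrightarrow> \<exists>N B. infinite N \<and> (\<forall>n\<in>N. \<bar>h n\<bar> \<le> B)"
proof -
  assume "has_cauchy_subseq h"
  then obtain r where r: "strict_mono r" "Cauchy (h \<circ> r)" unfolding has_cauchy_subseq_def by blast
  obtain K where K: "\<forall>n. norm ((h \<circ> r) n) \<le> K" using Cauchy_Bseq[OF r(2)] BseqE by metis
  have "inj r" using strict_mono_imp_inj_on[OF r(1)] .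
  then have "infinite (range r)" by (rule range_inj_infinite)
  then show ?thesis using K by (intro exI[of _ "range r"] exI[of _ K]) auto
qed

lemma PB_cc: "cofinally_cauchy (h::nat \<Rightarrow> real) \<Longrightarrow> \<exists>N B. infinite N \<and> (\<forall>n\<in>N. \<bar>h n\<bar> \<le> B)"
proof -
  assume "cofinally_cauchy h"
  then have "\<exists>N. infinite N \<and> (\<forall>n\<in>N. \<forall>m\<in>N. dist (h n) (h m) < 1)"
    unfolding cofinally_cauchy_def by (erule_tac x=1 in allE) simp
  then obtain N where N: "infinite N" "\<forall>n\<in>N. \<forall>m\<in>N. dist (h n) (h m) < 1"
    by blast
  obtain n0 where n0: "n0 \<in> N" using N(1) by (metis ex_in_conv finite.emptyI)
  have b: "\<bar>h n\<bar> \<le> \<bar>h n0\<bar> + 1" if "n \<in> N" for n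
  proof -
    have "dist (h n) (h n0) < 1" using N(2) that n0 by blast
    then have "\<bar>h n - h n0\<bar> < 1" by (simp add: dist_real_def)
    then show ?thesis by linarith
  qed
  show ?thesis by (rule exI[of _ N], rule exI[of _ "\<bar>h n0\<bar> + 1"]) (use N(1) b in blast)
qed

lemma PB_cbc: "cofinally_bourbaki_cauchy (h::nat \<Rightarrow> real) \<Longrightarrow> \<exists>N B. infinite N \<and> (\<forall>n\<in>N. \<bar>h n\<bar> \<le> B)"
proof -
  assume "cofinally_bourbaki_cauchy h"
  then have "\<exists>N. \<exists>m\<ge>1. \<exists>q. infinite N \<and> (\<forall>n\<in>N. h n \<in> bourbaki_ball m q 1)"
    unfolding cofinally_bourbaki_cauchy_def by (erule_tac x=1 in allE) simp
  then obtain N m q where N: "infinite N" "\<forall>n\<in>N. h n \<in> bourbaki_ball m q 1"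
    by blast
  then have "\<forall>n\<in>N. h n \<in> ball q (real m * 1)" using bball_sub[of 1 m q] by auto
  have "\<bar>h n\<bar> \<le> \<bar>q\<bar> + real m" if "n \<in> N" for n
  proof -
    have "dist q (h n) < real m" using \<open>\<forall>n\<in>N. h n \<in> ball q (real m * 1)\<close> that by simp
    then have "\<bar>q - h n\<bar> < real m" by (simp add: dist_real_def)
    then show ?thesis by linarith
  qed
  then show ?thesis using N(1) by blast
qed

theorem mainTheorem7:
  fixes S :: "'a::metric_space set"
  shows
  "(cofinally_bourbaki_quasi_complete S \<longrightarrow>
      (\<forall>f::'a \<Rightarrow> 'b::metric_space. continuous_on S f \<longrightarrow>
         (\<forall>x. cofinally_bourbaki_quasi_cauchy S x \<longrightarrow> has_cauchy_subseq (f \<circ> x))) \<and>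
      (\<forall>f::'a \<Rightarrow> 'b. continuous_on S f \<longrightarrow>
         (\<forall>x. cofinally_bourbaki_quasi_cauchy S x \<longrightarrow> cofinally_cauchy (f \<circ> x))) \<and>
      (\<forall>f::'a \<Rightarrow> 'b. continuous_on S f \<longrightarrow>
         (\<forall>x. cofinally_bourbaki_quasi_cauchy S x \<longrightarrow> cofinally_bourbaki_cauchy (f \<circ> x))))
   \<and> ((\<forall>f::'a \<Rightarrow> real. continuous_on S f \<longrightarrow>
         (\<forall>x. cofinally_bourbaki_quasi_cauchy S x \<longrightarrow> has_cauchy_subseq (f \<circ> x)))
       \<longrightarrow> cofinally_bourbaki_quasi_complete S)
   \<and> ((\<forall>f::'a \<Rightarrow> real. continuous_on S f \<longrightarrow>
         (\<forall>x. cofinally_bourbaki_quasi_cauchy S x \<longrightarrow> cofinally_cauchy (f \<circ> x)))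
       \<longrightarrow> cofinally_bourbaki_quasi_complete S)
   \<and> (cofinally_bourbaki_quasi_complete S \<longleftrightarrow>
       (\<forall>f::'a \<Rightarrow> real. continuous_on S f \<longrightarrow>
         (\<forall>x. cofinally_bourbaki_quasi_cauchy S x \<longrightarrow> cofinally_bourbaki_cauchy (f \<circ> x))))"
proof -
  have F: "cofinally_bourbaki_quasi_complete S \<longrightarrow>
      (\<forall>f::'a \<Rightarrow> 'b::metric_space. continuous_on S f \<longrightarrow>
         (\<forall>x. cofinally_bourbaki_quasi_cauchy S x \<longrightarrow> has_cauchy_subseq (f \<circ> x))) \<and>
      (\<forall>f::'a \<Rightarrow> 'b. continuous_on S f \<longrightarrow>
         (\<forall>x. cofinally_bourbaki_quasi_cauchy S x \<longrightarrow> cofinally_cauchy (f \<circ> x))) \<and>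
      (\<forall>f::'a \<Rightarrow> 'b. continuous_on S f \<longrightarrow>
         (\<forall>x. cofinally_bourbaki_quasi_cauchy S x \<longrightarrow> cofinally_bourbaki_cauchy (f \<circ> x)))"
    by (simp add: forward)
  have B1: "(\<forall>f::'a \<Rightarrow> real. continuous_on S f \<longrightarrow>
         (\<forall>x. cofinally_bourbaki_quasi_cauchy S x \<longrightarrow> has_cauchy_subseq (f \<circ> x)))
       \<longrightarrow> cofinally_bourbaki_quasi_complete S"
    by (rule impI, rule backward[OF _ PB_hcs])
  have B2: "(\<forall>f::'a \<Rightarrow> real. continuous_on S f \<longrightarrow>
         (\<forall>x. cofinally_bourbaki_quasi_cauchy S x \<longrightarrow> cofinally_cauchy (f \<circ> x)))
       \<longrightarrow> cofinally_bourbaki_quasi_complete S"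
    by (rule impI, rule backward[OF _ PB_cc])
  have B3: "(\<forall>f::'a \<Rightarrow> real. continuous_on S f \<longrightarrow>
         (\<forall>x. cofinally_bourbaki_quasi_cauchy S x \<longrightarrow> cofinally_bourbaki_cauchy (f \<circ> x)))
       \<longrightarrow> cofinally_bourbaki_quasi_complete S"
    by (rule impI, rule backward[OF _ PB_cbc])
  have F3: "cofinally_bourbaki_quasi_complete S \<longrightarrow>
       (\<forall>f::'a \<Rightarrow> real. continuous_on S f \<longrightarrow>
         (\<forall>x. cofinally_bourbaki_quasi_cauchy S x \<longrightarrow> cofinally_bourbaki_cauchy (f \<circ> x)))"
    by (simp add: forward)
  show ?thesis
  proof (intro conjI)
    show "cofinally_bourbaki_quasi_complete S =
       (\<forall>f::'a \<Rightarrow> real. continuous_on S f \<longrightarrow>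
         (\<forall>x. cofinally_bourbaki_quasi_cauchy S x \<longrightarrow> cofinally_bourbaki_cauchy (f \<circ> x)))"
      using F3 B3 by blast
  qed (fact F B1 B2)+
qed

end
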